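(* Let $N\in\mathbb{N}$ with $N\ge3$, $s\in\mathbb{N}$, and $n\in\mathbb{N}$ with $n\ge n^{[1]}(s)$. Then there is a real $E$ with $|E|\le C^{[3]}_N(s)\,n^{-\frac{N+2}{2}}$ such that \[ \frac{e^{2\pi\sqrt{\frac{n+s}{3}}}}{8\cdot3^{3/4}\sqrt\pi(n+s)^{5/4}}=\frac{e^{2\pi\sqrt{\frac n3}}}{8\cdot3^{3/4}\sqrt\pi\,n^{5/4}}\left(\sum_{m=0}^{N+1}\frac{d^{[2]}_s(m)}{n^{\frac m2}}+E\right). \]
   Context: $n^{[1]}(s):=2s^4$ if $s\ge2$ and $n^{[1]}(1):=4$. For $m\in\mathbb{N}_0$: $e^{[1]}_s(0):=1$, $e^{[1]}_s(m):=\frac{s^m(2m-1)!}{(-4)^m}\sum_{\nu=1}^{m}\frac{(-4\pi^2s/3)^\nu}{(2\nu-1)!(\nu+m)!(m-\nu)!}$ ($m\ge1$); $o^{[1]}_s(m):=\frac{\pi s^{m+1}(2m)!}{\sqrt3(-4)^m}\sum_{\nu=0}^{m}\frac{(-4\pi^2s/3)^\nu}{(2\nu)!(m-\nu)!(\nu+m+1)!}$; $e^{[2]}_s(m):=\binom{-5/4}{m}s^m$; $e^{[3]}_s(m):=\sum_{k=0}^m e^{[1]}_s(k)e^{[2]}_s(m-k)$, $o^{[3]}_s(m):=\sum_{k=0}^m o^{[1]}_s(k)e^{[2]}_s(m-k)$; $d^{[2]}_s(2m):=e^{[3]}_s(m)$, $d^{[2]}_s(2m+1):=o^{[3]}_s(m)$.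 With $\kappa_s:=\cosh(2\pi\sqrt{s/3})$, $C^{[1]}_N(s):=1.5s^{\frac{N+3}{2}}\kappa_s$, $C^{[2]}_N(s):=\frac{20s}{11}(\frac{5s}{4})^{N/2}$, and $C^{[3]}_N(s):=2.7C^{[1]}_N(s)+(1+1.2\sqrt s)C^{[2]}_N(s)+((20.5+12s)C^{[2]}_N(s)+0.7)\kappa_s$. *)

theory Defs
  imports "HOL-Analysis.Analysis"
begin

definition n1 :: "nat \<Rightarrow> nat" where
  "n1 s = (if s \<ge> 2 then 2 * s ^ 4 else 4)"

definition e1 :: "nat \<Rightarrow> nat \<Rightarrow> real" where
  "e1 s m = (if m = 0 then 1 else
     real s ^ m * fact (2*m - 1) / (-4) ^ m *
     (\<Sum>\<nu>=1..m. (-4 * pi^2 * real s / 3) ^ \<nu> /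
        (fact (2*\<nu> - 1) * fact (\<nu> + m) * fact (m - \<nu>))))"

definition o1 :: "nat \<Rightarrow> nat \<Rightarrow> real" where
  "o1 s m = pi * real s ^ (m+1) * fact (2*m) / (sqrt 3 * (-4) ^ m) *
     (\<Sum>\<nu>=0..m. (-4 * pi^2 * real s / 3) ^ \<nu> /
        (fact (2*\<nu>) * fact (m - \<nu>) * fact (\<nu> + m + 1)))"

definition e2 :: "nat \<Rightarrow> nat \<Rightarrow> real" where
  "e2 s m = ((-5/4 :: real) gchoose m) * real s ^ m"

definition e3 :: "nat \<Rightarrow> nat \<Rightarrow> real" where
  "e3 s m = (\<Sum>k=0..m. e1 s k * e2 s (m - k))"

definition o3 :: "nat \<Rightarrow> nat \<Rightarrow> real" where
  "o3 s m = (\<Sum>k=0..m. o1 s k * e2 s (m - k))"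

definition d2 :: "nat \<Rightarrow> nat \<Rightarrow> real" where
  "d2 s m = (if even m then e3 s (m div 2) else o3 s (m div 2))"

definition kappa :: "nat \<Rightarrow> real" where
  "kappa s = cosh (2 * pi * sqrt (real s / 3))"

definition C1 :: "nat \<Rightarrow> nat \<Rightarrow> real" where
  "C1 N s = 1.5 * real s powr ((real N + 3) / 2) * kappa s"

definition C2 :: "nat \<Rightarrow> nat \<Rightarrow> real" where
  "C2 N s = 20 * real s / 11 * (5 * real s / 4) powr (real N / 2)"

definition C3 :: "nat \<Rightarrow> nat \<Rightarrow> real" where
  "C3 N s = 2.7 * C1 N s + (1 + 1.2 * sqrt (real s)) * C2 N s
     + ((20.5 + 12 * real s) * C2 N s + 0.7) * kappa s"

end

theory Submission
  imports Defs
begin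

definition bb :: "real \<Rightarrow> nat \<Rightarrow> nat \<Rightarrow> real" where
  "bb \<sigma> j n = (if j = 0 \<and> n = 0 then 1 else
     real j * fact (2*n+j-1) / (fact n * fact (n+j)) * (\<sigma>/2)^j * (-\<sigma>/4)^n)"

lemma bb_rec_aux0:
  fixes A B F Y P \<sigma> u v w :: real
  assumes "A \<noteq> 0" "B \<noteq> 0" "F \<noteq> 0" "u \<noteq> 0" "v \<noteq> 0" "w \<noteq> 0" "w = v + 1"
  shows "(w-u+1) * A / (F * (w * v * B)) * (Y * (\<sigma>/2)\<^sup>2) * P =
    \<sigma> * ((v-u) * A / (u * F * (v * B)) * Y * (P * (- \<sigma> / 4))) -
    2 * ((v-u+1) * ((u+v) * A) / (u * F * (w * v * B)) * (Y * (\<sigma> / 2)) * (P * (- \<sigma> / 4)))"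
  using assms(1-6) apply (simp add: field_simps power2_eq_square)
  apply (simp add: assms(7) algebra_simps)
  done

lemma bb_rec_aux:
  fixes A B F Y P \<sigma> a b :: real
  assumes "A > 0" "B > 0" "F > 0" "a \<ge> 0" "b \<ge> 0"
  shows "(b+2) * A / (F * ((a + b + 2) * (a + b + 1) * B)) * (Y * (\<sigma>/2)\<^sup>2) * P =
    \<sigma> * (b * A / ((a + 1) * F * ((a + b + 1) * B)) * Y * (P * (- \<sigma> / 4))) -
    2 * ((b+1) * ((2*a+b+2) * A) / ((a + 1) * F * ((a + b + 2) * (a + b + 1) * B)) * (Y * (\<sigma> / 2)) * (P * (- \<sigma> / 4)))"
  using bb_rec_aux0[of A B F "a+1" "a+b+1" "a+b+2" Y \<sigma> P] assms by (simp add: algebra_simps)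

lemma bb_rec: "bb \<sigma> (j+2) n = \<sigma> * bb \<sigma> j (n+1) - 2 * bb \<sigma> (j+1) (n+1)"
proof -
  define A where "A = (fact (2*n+j+1) :: real)"
  define B where "B = (fact (n+j) :: real)"
  define F where "F = (fact n :: real)"
  have A0: "A > 0" "B > 0" "F > 0" unfolding A_def B_def F_def by auto
  have e1: "fact (2*n+(j+2)-1) = A" unfolding A_def by (simp add: algebra_simps)
  have e2: "fact (2*(n+1)+j-1) = A" unfolding A_def by (simp add: algebra_simps)
  have e3: "fact (2*(n+1)+(j+1)-1) = (2*n+j+2) * A" unfolding A_def
    by (simp add: algebra_simps fact_Suc)
  have e4: "fact (n+(j+2)) = (real n+j+2)*(real n+j+1) * B" unfolding B_def
    by (simp add: algebra_simps fact_Suc)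
  have e5: "fact (n+1+j) = (real n+j+1) * B" unfolding B_def
    by (simp add: algebra_simps fact_Suc)
  have e6: "fact (n+1+(j+1)) = (real n+j+2)*(real n+j+1) * B" unfolding B_def
    by (simp add: algebra_simps fact_Suc)
  have e7: "fact (n+1) = (real n+1) * F" unfolding F_def by (simp add: fact_Suc algebra_simps)
  have p1: "(\<sigma>/2)^(j+2) = (\<sigma>/2)^j * (\<sigma>/2)^2" by (simp only: power_add power_one_right)
  have p2: "(\<sigma>/2)^(j+1) = (\<sigma>/2)^j * (\<sigma>/2)" by (simp only: power_add power_one_right)
  have p3: "(-\<sigma>/4)^(n+1) = (-\<sigma>/4)^n * (-\<sigma>/4)" by (simp only: power_add power_one_right)
  show ?thesis
    unfolding bb_def using A0
    apply (simp only: e1 e2 e3 e4 e5 e6 e7 p1 p2 p3 F_def[symmetric] if_False)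
    using bb_rec_aux[of A B F "real n" "real j" "(\<sigma>/2)^j" \<sigma> "(-\<sigma>/4)^n"]
    by (simp add: algebra_simps)
qed

lemma half_gchoose_mult:
  "fact n * fact (n+1) * ((1/2::real) gchoose Suc n) = fact (2*n) * (1/2) * (-1/4)^n"
proof (induction n)
  case 0
  then show ?case by simp
next
  case (Suc n)
  have r: "real (Suc (Suc n)) * ((1/2::real) gchoose Suc (Suc n)) = (1/2 - real (Suc n)) * ((1/2::real) gchoose Suc n)"
    using gbinomial_mult_1[of "1/2::real" "Suc n"] by (simp add: algebra_simps)
  have "fact (Suc n) * fact (Suc n + 1) * ((1/2::real) gchoose Suc (Suc n))
      = fact (Suc n) * fact (Suc n) * (real (Suc (Suc n)) * ((1/2::real) gchoose Suc (Suc n)))"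
    by (simp add: fact_Suc algebra_simps)
  also have "\<dots> = fact (Suc n) * fact (Suc n) * ((1/2 - real (Suc n)) * ((1/2::real) gchoose Suc n))"
    unfolding r ..
  also have "\<dots> = (real n + 1) * (1/2 - real (Suc n)) * (fact n * fact (n+1) * ((1/2::real) gchoose Suc n))"
    by (simp add: fact_Suc)
  also have "\<dots> = (real n + 1) * (1/2 - real (Suc n)) * (fact (2*n) * (1/2) * (-1/4)^n)"
    unfolding Suc ..
  also have "\<dots> = fact (2 * Suc n) * (1/2) * (-1/4)^(Suc n)"
  proof -
    have "fact (2 * Suc n) = (2*real n+2)*(2*real n+1)*(fact (2*n)::real)" by (simp add: fact_Suc algebra_simps)
    moreover have "(real n + 1) * (1/2 - (real n + 1)) * (F * (1/2) * q) = (2*real n+2)*(2*real n+1)*F*(1/2)*(q*(-1/4))" for F q :: real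
      by algebra
    ultimately show ?thesis by simp
  qed
  finally show ?case .
qed

lemma half_gchoose:
  "((1/2::real) gchoose Suc n) = fact (2*n) / (fact n * fact (n+1)) * (1/2) * (-1/4)^n"
proof -
  have "(fact n * fact (n+1) :: real) \<noteq> 0" by simp
  then show ?thesis using half_gchoose_mult[of n] by (simp add: field_simps)
qed

definition ww :: "real \<Rightarrow> real \<Rightarrow> real" where
  "ww \<sigma> x = (sqrt (1 + \<sigma> * x^2) - 1) / x"

lemma ww_sq:
  assumes "x \<noteq> 0" "1 + \<sigma> * x^2 \<ge> 0"
  shows "(ww \<sigma> x)^2 = \<sigma> - 2 * ww \<sigma> x / x"
proof -
  define S where "S = sqrt (1 + \<sigma> * x^2)"
  have S2: "S^2 = 1 + \<sigma> * x^2" unfolding S_def using assms by simp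
  have "(ww \<sigma> x)^2 = (S^2 - 2*S + 1) / x^2" unfolding ww_def S_def[symmetric]
    by (simp add: power_divide power2_eq_square algebra_simps)
  also have "\<dots> = \<sigma> - 2 * ((S - 1)/x) / x" unfolding S2 using assms(1)
    by (simp add: field_simps power2_eq_square)
  finally show ?thesis unfolding ww_def S_def .
qed

lemma bb_0: "bb \<sigma> 0 n = (if n = 0 then 1 else 0)"
  by (simp add: bb_def)

lemma bb_j0: "bb \<sigma> j 0 = (\<sigma>/2)^j"
proof (cases j)
  case 0
  then show ?thesis by (simp add: bb_def)
next
  case (Suc k)
  have "real (Suc k) * fact k / fact (Suc k) = (1::real)" by (simp add: fact_Suc)
  then show ?thesis unfolding Suc bb_def by simp
qed

lemma bb_init: "\<sigma> * bb \<sigma> i 0 - 2 * bb \<sigma> (i+1) 0 = 0"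
  unfolding bb_j0 by simp

lemma claimA:
  assumes x: "x \<noteq> 0" and sx: "\<bar>\<sigma> * x^2\<bar> < 1"
  shows "(\<lambda>n. bb \<sigma> j n * x^(j+2*n)) sums (ww \<sigma> x)^j"
proof (induction j rule: less_induct)
  case (less j)
  consider "j = 0" | "j = 1" | i where "j = i + 2"
    by (metis One_nat_def add_2_eq_Suc' not0_implies_Suc)
  then show ?case
  proof cases
    case 1
    have "(\<lambda>n. bb \<sigma> j n * x^(j+2*n)) = (\<lambda>n. if n = 0 then (\<lambda>_. 1::real) n else 0)"
      using 1 by (auto simp: bb_0)
    then show ?thesis using sums_single[of 0 "\<lambda>_. 1::real"] 1 by simp
  next
    case 2
    have "(\<lambda>k. ((1/2) gchoose k) * (\<sigma> * x^2) ^ k) sums sqrt (1 + \<sigma> * x^2)"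
      by (rule sqrt_series[OF sx])
    then have "(\<lambda>k. ((1/2) gchoose Suc k) * (\<sigma> * x^2) ^ Suc k) sums (sqrt (1 + \<sigma> * x^2) - 1)"
      by (subst sums_Suc_iff) simp
    then have "(\<lambda>k. ((1/2) gchoose Suc k) * (\<sigma> * x^2) ^ Suc k / x) sums ((sqrt (1 + \<sigma> * x^2) - 1) / x)"
      by (rule sums_divide)
    moreover have "((1/2) gchoose Suc k) * (\<sigma> * x^2) ^ Suc k / x = bb \<sigma> 1 k * x^(1+2*k)" for k
    proof -
      have e1: "(x^2)^Suc k = x^(1+2*k) * x"
        by (simp add: power_mult[symmetric] power_add[symmetric])
      have q1: "(\<sigma> * x^2) ^ Suc k / x = \<sigma> * \<sigma>^k * x^(1+2*k)"
        using x unfolding power_mult_distrib e1 by simp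
      moreover have "(-\<sigma>/4)^k = (-1/4)^k * \<sigma>^k"
        by (simp add: power_mult_distrib[symmetric])
      moreover have q2: "bb \<sigma> 1 k = ((1/2) gchoose Suc k) * \<sigma> * \<sigma>^k"
        unfolding half_gchoose bb_def using calculation(2) by (simp add: field_simps)
      show ?thesis by (subst times_divide_eq_right[symmetric]) (simp only: q1 q2 mult.assoc)
    qed
    ultimately show ?thesis using 2 by (simp add: ww_def)
  next
    case 3
    have IH1: "(\<lambda>n. bb \<sigma> i n * x^(i+2*n)) sums (ww \<sigma> x)^i" by (intro less.IH) (simp add: 3)
    have IH2: "(\<lambda>n. bb \<sigma> (i+1) n * x^(i+1+2*n)) sums (ww \<sigma> x)^(i+1)" by (intro less.IH) (simp add: 3)
    define T where "T n = (\<sigma> * bb \<sigma> i n - 2 * bb \<sigma> (i+1) n) * x^(i+2*n)" for n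
    have "(\<lambda>n. \<sigma> * (bb \<sigma> i n * x^(i+2*n)) - 2 / x * (bb \<sigma> (i+1) n * x^(i+1+2*n))) sums
            (\<sigma> * (ww \<sigma> x)^i - 2 / x * (ww \<sigma> x)^(i+1))"
      by (intro sums_diff sums_mult IH1 IH2)
    moreover have "\<sigma> * (bb \<sigma> i n * x^(i+2*n)) - 2 / x * (bb \<sigma> (i+1) n * x^(i+1+2*n)) = T n" for n
      unfolding T_def using x by (simp add: field_simps power_add)
    moreover have "\<sigma> * (ww \<sigma> x)^i - 2 / x * (ww \<sigma> x)^(i+1) = (ww \<sigma> x)^(i+2)"
    proof -
      have "1 + \<sigma> * x^2 \<ge> 0" using sx by linarith
      then have "(ww \<sigma> x)^(i+2) = (ww \<sigma> x)^i * (\<sigma> - 2 * ww \<sigma> x / x)"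
        using ww_sq[OF x, of \<sigma>] by (simp add: power_add power2_eq_square)
      then show ?thesis by (simp add: algebra_simps power_add)
    qed
    ultimately have "T sums (ww \<sigma> x)^(i+2)" by simp
    moreover have "T 0 = 0" unfolding T_def using bb_init[of \<sigma> i] by simp
    ultimately have "(\<lambda>n. T (Suc n)) sums (ww \<sigma> x)^(i+2)" by (subst sums_Suc_iff) simp
    moreover have "T (Suc n) = bb \<sigma> j n * x^(j+2*n)" for n
    proof -
      have "bb \<sigma> (Suc (Suc i)) n = \<sigma> * bb \<sigma> i (Suc n) - 2 * bb \<sigma> (Suc i) (Suc n)"
        using bb_rec[of \<sigma> i n] by simp
      moreover have "x^(i + 2 * Suc n) = x^(Suc (Suc i) + 2 * n)" by simp
      ultimately show ?thesis unfolding T_def 3 by simp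
    qed
    ultimately show ?thesis using 3 by simp
  qed
qed

lemma abs_bb: "\<bar>bb \<sigma> j n * x^(j+2*n)\<bar> = bb (-\<bar>\<sigma>\<bar>) j n * (-\<bar>x\<bar>)^(j+2*n)"
proof (cases "j = 0 \<and> n = 0")
  case True
  then show ?thesis by (simp add: bb_def)
next
  case False
  define K where "K = real j * fact (2*n+j-1) / (fact n * fact (n+j))"
  have K: "K \<ge> 0" unfolding K_def by simp
  have bbK: "bb \<sigma>' j n = K * (\<sigma>'/2)^j * (-\<sigma>'/4)^n" for \<sigma>'
    using False unfolding bb_def K_def by auto
  have sgn: "(-1::real)^j * (-1)^(j+2*n) = 1"
    by (simp add: power_add power_mult flip: power_mult_distrib)
  have "\<bar>bb \<sigma> j n * x^(j+2*n)\<bar> = K * (\<bar>\<sigma>\<bar>/2)^j * (\<bar>\<sigma>\<bar>/4)^n * \<bar>x\<bar>^(j+2*n)"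
    using K unfolding bbK
    by (simp add: abs_mult power_abs)
  also have "\<dots> = K * (\<bar>\<sigma>\<bar>/2)^j * (\<bar>\<sigma>\<bar>/4)^n * \<bar>x\<bar>^(j+2*n) * ((-1::real)^j * (-1)^(j+2*n))"
    by (simp add: sgn)
  also have "\<dots> = bb (-\<bar>\<sigma>\<bar>) j n * (-\<bar>x\<bar>)^(j+2*n)"
  proof -
    have h1: "(-\<bar>\<sigma>\<bar>/2)^j = (-1)^j*(\<bar>\<sigma>\<bar>/2)^j"
      by (metis power_minus minus_divide_left)
    have h2: "(-\<bar>x\<bar>)^(j+2*n) = (-1)^(j+2*n)*\<bar>x\<bar>^(j+2*n)"
      by (rule power_minus)
    have h3: "(- (-\<bar>\<sigma>\<bar>)/4) = \<bar>\<sigma>\<bar>/4" by simp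
    show ?thesis unfolding bbK h1 h2 h3 by (simp add: mult_ac)
  qed
  finally show ?thesis .
qed

lemma ww_nonneg_neg:
  assumes "\<bar>\<sigma> * x^2\<bar> < 1" "x \<noteq> 0"
  shows "ww (-\<bar>\<sigma>\<bar>) (-\<bar>x\<bar>) \<ge> 0"
proof -
  have "1 + -\<bar>\<sigma>\<bar> * (-\<bar>x\<bar>)^2 \<le> 1" by simp
  then have "sqrt (1 + -\<bar>\<sigma>\<bar> * (-\<bar>x\<bar>)^2) \<le> 1" by simp
  then show ?thesis unfolding ww_def using assms(2)
    by (simp add: divide_nonpos_neg)
qed

definition aa :: "real \<Rightarrow> real \<Rightarrow> nat \<Rightarrow> real" where
  "aa c \<sigma> k = (\<Sum>n\<le>k div 2. c^(k-2*n) / fact (k-2*n) * bb \<sigma> (k-2*n) n)"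

lemma claimB:
  assumes x: "x \<noteq> 0" and sx: "\<bar>\<sigma> * x^2\<bar> < 1"
  shows "(\<lambda>k. aa c \<sigma> k * x^k) sums exp (c * ww \<sigma> x)"
proof -
  define f where "f = (\<lambda>(j,n). c^j / fact j * (bb \<sigma> j n * x^(j+2*n)))"
  define Wh where "Wh = ww (-\<bar>\<sigma>\<bar>) (-\<bar>x\<bar>)"
  have Wh0: "Wh \<ge> 0" unfolding Wh_def by (rule ww_nonneg_neg[OF sx x])
  have inner: "(\<lambda>n. f (j,n)) sums (c^j / fact j * (ww \<sigma> x)^j)" for j
    unfolding f_def prod.case by (intro sums_mult claimA[OF x sx])
  have absf: "norm (f (j,n)) = \<bar>c\<bar>^j / fact j * (bb (-\<bar>\<sigma>\<bar>) j n * (-\<bar>x\<bar>)^(j+2*n))" for j n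
  proof -
    have "norm (f (j,n)) = \<bar>c^j / fact j\<bar> * \<bar>bb \<sigma> j n * x^(j+2*n)\<bar>"
      unfolding f_def by (simp only: prod.case real_norm_def abs_mult[of "c^j/fact j"])
    also have "\<dots> = \<bar>c\<bar>^j / fact j * (bb (-\<bar>\<sigma>\<bar>) j n * (-\<bar>x\<bar>)^(j+2*n))"
      unfolding abs_bb by (simp add: power_abs)
    finally show ?thesis .
  qed
  have sx': "\<bar>-\<bar>\<sigma>\<bar> * (-\<bar>x\<bar>)^2\<bar> < 1" using sx by (simp add: abs_mult)
  have x': "-\<bar>x\<bar> \<noteq> 0" using x by simp
  have inner_abs: "(\<lambda>n. norm (f (j,n))) sums (\<bar>c\<bar>^j / fact j * Wh^j)" for j
    unfolding absf Wh_def by (intro sums_mult claimA[OF x' sx'])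
  have expser: "(\<lambda>j. a^j / fact j * b^j) sums exp (a * b)" for a b :: real
  proof -
    have "(\<lambda>n. (a*b)^n /\<^sub>R fact n) = (\<lambda>j. a^j / fact j * b^j)"
      by (rule ext) (simp add: power_mult_distrib divide_inverse)
    then show ?thesis using exp_converges[of "a*b"] by simp
  qed
  have outer_abs: "(\<lambda>j. \<bar>c\<bar>^j / fact j * Wh^j) sums exp (\<bar>c\<bar> * Wh)"
    by (rule expser)
  have nn: "\<bar>c\<bar>^j / fact j * Wh^j \<ge> 0" for j using Wh0 by simp
  have SU: "Sigma UNIV (\<lambda>_. UNIV) = (UNIV :: (nat\<times>nat) set)" by simp
  have "(\<lambda>p. norm (f p)) summable_on Sigma UNIV (\<lambda>_. UNIV)"
  proof (rule summable_on_SigmaI)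
    show "((\<lambda>n. norm (f (j, n))) has_sum (\<bar>c\<bar>^j / fact j * Wh^j)) UNIV" for j
      by (rule sums_nonneg_imp_has_sum[OF inner_abs]) simp
    show "(\<lambda>j. \<bar>c\<bar>^j / fact j * Wh^j) summable_on UNIV"
      using outer_abs nn by (simp add: summable_on_UNIV_nonneg_real_iff sums_summable)
  qed simp
  then have "(\<lambda>p. norm (f p)) summable_on UNIV" unfolding SU .
  then have "f summable_on UNIV"
    by (rule iffD2[OF summable_on_iff_abs_summable_on_real])
  then have hs: "(f has_sum infsum f UNIV) (Sigma UNIV (\<lambda>_. UNIV))" by simp
  have "((\<lambda>j. c^j / fact j * (ww \<sigma> x)^j) has_sum infsum f UNIV) UNIV"
  proof (rule has_sum_SigmaD[OF hs])
    show "((\<lambda>n. f (j, n)) has_sum c ^ j / fact j * ww \<sigma> x ^ j) UNIV" for j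
      by (rule norm_summable_imp_has_sum[OF sums_summable[OF inner_abs] inner])
  qed
  then have "(\<lambda>j. c^j / fact j * (ww \<sigma> x)^j) sums infsum f UNIV" by (rule has_sum_imp_sums)
  moreover have "(\<lambda>j. c^j / fact j * (ww \<sigma> x)^j) sums exp (c * ww \<sigma> x)"
    by (rule expser)
  ultimately have Sval: "infsum f UNIV = exp (c * ww \<sigma> x)" using sums_unique2 by blast
  define g where "g = (\<lambda>(k,n). f (k - 2*n, n))"
  have "(g has_sum exp (c * ww \<sigma> x)) (Sigma UNIV (\<lambda>k. {..k div 2}))
      = (f has_sum exp (c * ww \<sigma> x)) UNIV"
    apply (rule has_sum_reindex_bij_witness[where j = "\<lambda>(k,n). (k - 2*n, n)" and i = "\<lambda>(j,n). (j + 2*n, n)"])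
    apply (clarsimp; linarith)
    apply simp
    apply clarsimp
    apply clarsimp
    apply (clarsimp simp: g_def)
    apply simp
    done
  then have hg: "(g has_sum exp (c * ww \<sigma> x)) (Sigma UNIV (\<lambda>k. {..k div 2}))"
    using hs Sval by simp
  have "((\<lambda>k. \<Sum>n\<le>k div 2. g (k,n)) has_sum exp (c * ww \<sigma> x)) UNIV"
    by (rule has_sum_SigmaD[OF hg]) (intro has_sum_finiteI; simp)
  then have "(\<lambda>k. \<Sum>n\<le>k div 2. g (k,n)) sums exp (c * ww \<sigma> x)" by (rule has_sum_imp_sums)
  moreover have "(\<Sum>n\<le>k div 2. g (k,n)) = aa c \<sigma> k * x^k" for k
  proof -
    have "(\<Sum>n\<le>k div 2. g (k,n)) = (\<Sum>n\<le>k div 2. c^(k-2*n) / fact (k-2*n) * bb \<sigma> (k-2*n) n * x^k)"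
    proof (rule sum.cong)
      fix n assume "n \<in> {..k div 2}"
      then have "k - 2*n + 2*n = k" by auto
      then show "g (k,n) = c^(k-2*n) / fact (k-2*n) * bb \<sigma> (k-2*n) n * x^k"
        unfolding g_def f_def by simp
    qed simp
    also have "\<dots> = aa c \<sigma> k * x^k" unfolding aa_def by (simp add: sum_distrib_right)
    finally show ?thesis .
  qed
  ultimately show ?thesis by simp
qed

lemma c0_sq: "(2*pi/sqrt 3)^2 = 4*pi^2/3"
  by (simp add: power_divide power_mult_distrib)

lemma pow_even_id:
  fixes \<sigma> :: real
  assumes m: "m = \<nu> + d"
  shows "(2*pi/sqrt 3)^(2*\<nu>) * (\<sigma>/2)^(2*\<nu>) * (-\<sigma>/4)^d = \<sigma>^m / (-4)^m * (-4*pi^2*\<sigma>/3)^\<nu>"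
proof -
  have a: "(2*pi/sqrt 3)^(2*\<nu>) = (4*pi^2/3)^\<nu>" by (simp add: power_mult c0_sq)
  have b: "(\<sigma>/2)^(2*\<nu>) = (\<sigma>^2/4)^\<nu>" by (simp add: power_mult power_divide)
  have c: "(-\<sigma>/4)^d = \<sigma>^d / (-4)^d"
    by (metis divide_minus_left minus_divide_right power_divide)
  have d: "\<sigma>^m / (-4)^m = \<sigma>^\<nu> / (-4)^\<nu> * (\<sigma>^d / (-4)^d)"
    unfolding m by (simp add: power_add)
  have e: "(4*pi^2/3)^\<nu> * (\<sigma>^2/4)^\<nu> = \<sigma>^\<nu> / (-4)^\<nu> * (-4*pi^2*\<sigma>/3)^\<nu>"
  proof -
    have "(4*pi^2/3)^\<nu> * (\<sigma>^2/4)^\<nu> = (4*pi^2/3 * (\<sigma>^2/4))^\<nu>" by (rule power_mult_distrib[symmetric])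
    also have "\<dots> = (\<sigma> / (-4) * (-4*pi^2*\<sigma>/3))^\<nu>" by (simp add: power2_eq_square field_simps)
    also have "\<dots> = \<sigma>^\<nu> / (-4)^\<nu> * (-4*pi^2*\<sigma>/3)^\<nu>" by (simp only: power_mult_distrib power_divide)
    finally show ?thesis .
  qed
  show ?thesis unfolding a b c d using e by (simp add: mult_ac)
qed

lemma pow_odd_id:
  fixes \<sigma> :: real
  assumes m: "m = \<nu> + d"
  shows "(2*pi/sqrt 3)^(2*\<nu>+1) * (\<sigma>/2)^(2*\<nu>+1) * (-\<sigma>/4)^d =
     pi * \<sigma>^(m+1) / (sqrt 3 * (-4)^m) * (-4*pi^2*\<sigma>/3)^\<nu>"
proof -
  have "(2*pi/sqrt 3)^(2*\<nu>+1) * (\<sigma>/2)^(2*\<nu>+1) * (-\<sigma>/4)^d =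
      (2*pi/sqrt 3) * (\<sigma>/2) * ((2*pi/sqrt 3)^(2*\<nu>) * (\<sigma>/2)^(2*\<nu>) * (-\<sigma>/4)^d)"
    by (simp add: mult_ac)
  also have "\<dots> = (2*pi/sqrt 3) * (\<sigma>/2) * (\<sigma>^m / (-4)^m * (-4*pi^2*\<sigma>/3)^\<nu>)"
    unfolding pow_even_id[OF m] ..
  also have "\<dots> = pi * \<sigma>^(m+1) / (sqrt 3 * (-4)^m) * (-4*pi^2*\<sigma>/3)^\<nu>"
    by (simp add: field_simps)
  finally show ?thesis .
qed


lemma aa_even: "aa (2*pi/sqrt 3) (real s) (2*m) = e1 s m"
proof (cases "m = 0")
  case True
  then show ?thesis by (simp add: aa_def bb_def e1_def)
next
  case False
  define c where "c = 2*pi/sqrt 3"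
  define \<sigma> where "\<sigma> = real s"
  define T where "T n = c^(2*m-2*n) / fact (2*m-2*n) * bb \<sigma> (2*m-2*n) n" for n
  have "aa c \<sigma> (2*m) = (\<Sum>n=0..m. T n)" unfolding aa_def T_def by (simp add: atMost_atLeast0)
  also have "\<dots> = (\<Sum>\<nu>=0..m. T (m - \<nu>))" by (subst sum.atLeastAtMost_rev) simp
  also have "\<dots> = T m + (\<Sum>\<nu>=1..m. T (m - \<nu>))" by (subst sum.atLeast_Suc_atMost) auto
  also have "T m = 0" unfolding T_def using False by (simp add: bb_def)
  also have "(\<Sum>\<nu>=1..m. T (m - \<nu>)) = (\<Sum>\<nu>=1..m. \<sigma>^m * fact (2*m-1) / (-4)^m *
        ((-4*pi^2*\<sigma>/3)^\<nu> / (fact (2*\<nu>-1) * fact (\<nu>+m) * fact (m-\<nu>))))"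
  proof (rule sum.cong)
    fix \<nu> assume "\<nu> \<in> {1..m}"
    then have \<nu>: "1 \<le> \<nu>" "\<nu> \<le> m" by auto
    define d where "d = m - \<nu>"
    have md: "m = \<nu> + d" using \<nu> unfolding d_def by simp
    have j: "2*m - 2*(m-\<nu>) = 2*\<nu>" using \<nu> by simp
    have bbv: "bb \<sigma> (2*\<nu>) d = 2*real \<nu> * fact (2*m-1) / (fact d * fact (m+\<nu>)) * (\<sigma>/2)^(2*\<nu>) * (-\<sigma>/4)^d"
    proof -
      have "bb \<sigma> (2*\<nu>) d = real (2*\<nu>) * fact (2*d+2*\<nu>-1) / (fact d * fact (d+2*\<nu>)) * (\<sigma>/2)^(2*\<nu>) * (-\<sigma>/4)^d"
        unfolding bb_def using \<nu> by simp
      moreover have "(fact (2*d+2*\<nu>-1) :: real) = fact (2*m-1)" unfolding md by (simp add: algebra_simps)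
      moreover have "(fact (d+2*\<nu>) :: real) = fact (m+\<nu>)" unfolding md by (rule arg_cong[where f=fact]) simp
      ultimately show ?thesis by simp
    qed
    have f2: "fact (2*\<nu>) = 2*real \<nu> * (fact (2*\<nu>-1) :: real)"
      using \<nu> by (metis fact_reduce mult_2 nat_0_less_mult_iff of_nat_mult of_nat_numeral zero_less_numeral
          One_nat_def Suc_le_eq less_le_trans zero_less_one le_numeral_extra(4))
    have pos: "(fact (2*\<nu>-1) :: real) > 0" "(fact d :: real) > 0" "(fact (m+\<nu>) :: real) > 0" "real \<nu> > 0"
      using \<nu> by auto
    have "T (m - \<nu>) = c^(2*\<nu>) / fact (2*\<nu>) * bb \<sigma> (2*\<nu>) d" unfolding T_def j d_def ..
    also have "\<dots> = fact (2*m-1) / (fact (2*\<nu>-1) * fact (m+\<nu>) * fact d) *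
        (c^(2*\<nu>) * (\<sigma>/2)^(2*\<nu>) * (-\<sigma>/4)^d)"
      unfolding bbv f2 using pos by (simp add: field_simps)
    also have "\<dots> = fact (2*m-1) / (fact (2*\<nu>-1) * fact (m+\<nu>) * fact d) *
        (\<sigma>^m / (-4)^m * (-4*pi^2*\<sigma>/3)^\<nu>)"
      unfolding c_def pow_even_id[OF md] ..
    also have "\<dots> = \<sigma>^m * fact (2*m-1) / (-4)^m *
        ((-4*pi^2*\<sigma>/3)^\<nu> / (fact (2*\<nu>-1) * fact (\<nu>+m) * fact (m-\<nu>)))"
      unfolding d_def by (simp add: field_simps add.commute)
    finally show "T (m - \<nu>) = \<sigma>^m * fact (2*m-1) / (-4)^m *
        ((-4*pi^2*\<sigma>/3)^\<nu> / (fact (2*\<nu>-1) * fact (\<nu>+m) * fact (m-\<nu>)))" .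
  qed simp
  also have "0 + \<dots> = e1 s m" unfolding e1_def \<sigma>_def using False
    by (simp add: sum_distrib_left)
  finally show ?thesis unfolding c_def \<sigma>_def .
qed


lemma gen_alg1:
  fixes A F M D P Q1 Q2 w :: real
  assumes "w \<noteq> 0" "F \<noteq> 0" "D \<noteq> 0" "P \<noteq> 0"
  shows "A / (w * F) * (w * M / (D * P) * Q1 * Q2) = M / (F * P * D) * (A * Q1 * Q2)"
  using assms by (simp add: field_simps)

lemma gen_alg2:
  fixes F M D P X Y R :: real
  assumes "F \<noteq> 0" "D \<noteq> 0" "P \<noteq> 0" "Y \<noteq> 0"
  shows "M / (F * P * D) * (X / Y * R) = X * M / Y * (R / (F * D * P))"
  using assms by (simp add: field_simps)

lemma aa_odd: "aa (2*pi/sqrt 3) (real s) (2*m+1) = o1 s m"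
proof -
  define c where "c = 2*pi/sqrt 3"
  define \<sigma> where "\<sigma> = real s"
  define T where "T n = c^(2*m+1-2*n) / fact (2*m+1-2*n) * bb \<sigma> (2*m+1-2*n) n" for n
  have dv: "(2*m+1) div 2 = m" by simp
  have "aa c \<sigma> (2*m+1) = (\<Sum>n=0..m. T n)" unfolding aa_def T_def dv by (simp add: atMost_atLeast0)
  also have "\<dots> = (\<Sum>\<nu>=0..m. T (m - \<nu>))" by (subst sum.atLeastAtMost_rev) simp
  also have "\<dots> = (\<Sum>\<nu>=0..m. pi * \<sigma>^(m+1) * fact (2*m) / (sqrt 3 * (-4)^m) *
        ((-4*pi^2*\<sigma>/3)^\<nu> / (fact (2*\<nu>) * fact (m-\<nu>) * fact (\<nu>+m+1))))"
  proof (rule sum.cong)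
    fix \<nu> assume "\<nu> \<in> {0..m}"
    then have \<nu>: "\<nu> \<le> m" by auto
    define d where "d = m - \<nu>"
    have md: "m = \<nu> + d" using \<nu> unfolding d_def by simp
    have j: "2*m + 1 - 2*(m-\<nu>) = 2*\<nu>+1" using \<nu> by simp
    have bbv: "bb \<sigma> (2*\<nu>+1) d = (2*real \<nu>+1) * fact (2*m) / (fact d * fact (\<nu>+m+1)) * (\<sigma>/2)^(2*\<nu>+1) * (-\<sigma>/4)^d"
    proof -
      have "bb \<sigma> (2*\<nu>+1) d = real (2*\<nu>+1) * fact (2*d+(2*\<nu>+1)-1) / (fact d * fact (d+(2*\<nu>+1))) * (\<sigma>/2)^(2*\<nu>+1) * (-\<sigma>/4)^d"
        unfolding bb_def by simp
      moreover have "(fact (2*d+(2*\<nu>+1)-1) :: real) = fact (2*m)" unfolding md by (rule arg_cong[where f=fact]) simp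
      moreover have "(fact (d+(2*\<nu>+1)) :: real) = fact (\<nu>+m+1)" unfolding md by (rule arg_cong[where f=fact]) simp
      ultimately show ?thesis by simp
    qed
    have f2: "fact (2*\<nu>+1) = (2*real \<nu>+1) * (fact (2*\<nu>) :: real)"
      by (simp add: fact_Suc)
    have pos: "(fact (2*\<nu>) :: real) > 0" "(fact d :: real) > 0" "(fact (\<nu>+m+1) :: real) > 0" "2*real \<nu>+1 > 0"
      by auto
    have "T (m - \<nu>) = c^(2*\<nu>+1) / fact (2*\<nu>+1) * bb \<sigma> (2*\<nu>+1) d" unfolding T_def j d_def ..
    also have "\<dots> = fact (2*m) / (fact (2*\<nu>) * fact (\<nu>+m+1) * fact d) *
        (c^(2*\<nu>+1) * (\<sigma>/2)^(2*\<nu>+1) * (-\<sigma>/4)^d)"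
      unfolding bbv f2 using pos by (intro gen_alg1) auto
    also have "\<dots> = fact (2*m) / (fact (2*\<nu>) * fact (\<nu>+m+1) * fact d) *
        (pi * \<sigma>^(m+1) / (sqrt 3 * (-4)^m) * (-4*pi^2*\<sigma>/3)^\<nu>)"
      unfolding c_def pow_odd_id[OF md] ..
    also have "\<dots> = pi * \<sigma>^(m+1) * fact (2*m) / (sqrt 3 * (-4)^m) *
        ((-4*pi^2*\<sigma>/3)^\<nu> / (fact (2*\<nu>) * fact (m-\<nu>) * fact (\<nu>+m+1)))"
      unfolding d_def by (intro gen_alg2) auto
    finally show "T (m - \<nu>) = pi * \<sigma>^(m+1) * fact (2*m) / (sqrt 3 * (-4)^m) *
        ((-4*pi^2*\<sigma>/3)^\<nu> / (fact (2*\<nu>) * fact (m-\<nu>) * fact (\<nu>+m+1)))" .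
  qed simp
  also have "\<dots> = o1 s m" unfolding o1_def \<sigma>_def
    by (simp add: sum_distrib_left)
  finally show ?thesis unfolding c_def \<sigma>_def .
qed

lemma sum_split_parity:
  fixes F :: "nat \<Rightarrow> real"
  shows "(\<Sum>i\<le>2*m. F i) = (\<Sum>l\<le>m. F (2*l)) + (\<Sum>l<m. F (2*l+1))"
    and "(\<Sum>i\<le>2*m+1. F i) = (\<Sum>l\<le>m. F (2*l)) + (\<Sum>l\<le>m. F (2*l+1))"
proof (induction m)
  case 0
  { case 1 show ?case by simp }
  { case 2 show ?case by simp }
next
  case (Suc m)
  { case 1
    have "(\<Sum>i\<le>2*Suc m. F i) = (\<Sum>i\<le>2*m+1. F i) + F (2*m+2)"
      by (simp add: numeral_2_eq_2)
    then show ?case using Suc(2) by (simp add: lessThan_Suc_atMost[symmetric])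
  }
  { case 2
    have "(\<Sum>i\<le>2*Suc m+1. F i) = (\<Sum>i\<le>2*m+1. F i) + F (2*m+2) + F (2*m+3)"
      by (simp add: numeral_2_eq_2 numeral_3_eq_3)
    then show ?case using Suc(2) by (simp add: algebra_simps)
  }
qed

definition bt :: "real \<Rightarrow> nat \<Rightarrow> real" where
  "bt \<sigma> k = (if even k then ((-5/4::real) gchoose (k div 2)) * \<sigma>^(k div 2) else 0)"

lemma d2_conv: "d2 s k = (\<Sum>i\<le>k. aa (2*pi/sqrt 3) (real s) i * bt (real s) (k-i))"
proof (cases "even k")
  case True
  then obtain m where k: "k = 2*m" by auto
  have "(\<Sum>i\<le>k. aa (2*pi/sqrt 3) (real s) i * bt (real s) (k-i)) =
     (\<Sum>l\<le>m. aa (2*pi/sqrt 3) (real s) (2*l) * bt (real s) (2*m-2*l)) +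
     (\<Sum>l<m. aa (2*pi/sqrt 3) (real s) (2*l+1) * bt (real s) (2*m-(2*l+1)))"
    unfolding k by (rule sum_split_parity(1))
  also have "(\<Sum>l<m. aa (2*pi/sqrt 3) (real s) (2*l+1) * bt (real s) (2*m-(2*l+1))) = 0"
  proof (rule sum.neutral, intro ballI)
    fix l assume "l \<in> {..<m}"
    then have "odd (2*m-(2*l+1))" by auto
    then show "aa (2*pi/sqrt 3) (real s) (2*l+1) * bt (real s) (2*m-(2*l+1)) = 0"
      by (simp add: bt_def)
  qed
  also have "(\<Sum>l\<le>m. aa (2*pi/sqrt 3) (real s) (2*l) * bt (real s) (2*m-2*l)) =
      (\<Sum>l=0..m. e1 s l * e2 s (m-l))"
    unfolding atMost_atLeast0
  proof (rule sum.cong)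
    fix l assume "l \<in> {0..m}"
    then have "2*m-2*l = 2*(m-l)" by auto
    then show "aa (2*pi/sqrt 3) (real s) (2*l) * bt (real s) (2*m-2*l) = e1 s l * e2 s (m-l)"
      by (simp add: aa_even bt_def e2_def)
  qed simp
  finally show ?thesis unfolding d2_def e3_def k by simp
next
  case False
  then obtain m where k: "k = 2*m+1" using oddE by blast
  have "(\<Sum>i\<le>k. aa (2*pi/sqrt 3) (real s) i * bt (real s) (k-i)) =
     (\<Sum>l\<le>m. aa (2*pi/sqrt 3) (real s) (2*l) * bt (real s) (2*m+1-2*l)) +
     (\<Sum>l\<le>m. aa (2*pi/sqrt 3) (real s) (2*l+1) * bt (real s) (2*m+1-(2*l+1)))"
    unfolding k by (rule sum_split_parity(2))
  also have "(\<Sum>l\<le>m. aa (2*pi/sqrt 3) (real s) (2*l) * bt (real s) (2*m+1-2*l)) = 0"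
  proof (rule sum.neutral, intro ballI)
    fix l assume "l \<in> {..m}"
    then have "odd (2*m+1-2*l)" by auto
    then show "aa (2*pi/sqrt 3) (real s) (2*l) * bt (real s) (2*m+1-2*l) = 0"
      by (simp add: bt_def)
  qed
  also have "(\<Sum>l\<le>m. aa (2*pi/sqrt 3) (real s) (2*l+1) * bt (real s) (2*m+1-(2*l+1))) =
      (\<Sum>l=0..m. o1 s l * e2 s (m-l))"
    unfolding atMost_atLeast0
  proof (rule sum.cong)
    fix l assume "l \<in> {0..m}"
    then have "2*m+1-(2*l+1) = 2*(m-l)" by auto
    then show "aa (2*pi/sqrt 3) (real s) (2*l+1) * bt (real s) (2*m+1-(2*l+1)) = o1 s l * e2 s (m-l)"
      using aa_odd[of s l] by (simp add: bt_def e2_def)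
  qed simp
  finally show ?thesis unfolding d2_def o3_def k by simp
qed

lemma claimC:
  assumes "\<bar>\<sigma> * y^2\<bar> < 1"
  shows "(\<lambda>k. bt \<sigma> k * y^k) sums (1 + \<sigma> * y^2) powr (-5/4)"
proof -
  have "(\<lambda>m. ((-5/4) gchoose m) * (\<sigma> * y^2)^m) sums (1 + \<sigma> * y^2) powr (-5/4)"
    by (rule gen_binomial_real[OF assms])
  moreover have "((-5/4) gchoose m) * (\<sigma> * y^2)^m = bt \<sigma> (2*m) * y^(2*m)" for m
    by (simp add: bt_def power_mult_distrib power_mult)
  ultimately have "(\<lambda>m. bt \<sigma> (2*m) * y^(2*m)) sums (1 + \<sigma> * y^2) powr (-5/4)" by simp
  then show ?thesis
    by (subst sums_mono_reindex[where g = "\<lambda>m. 2*m", symmetric])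
       (auto simp: strict_mono_def bt_def elim!: evenE)
qed

lemma gchoose54_sign: "\<bar>(-5/4::real) gchoose m\<bar> = (-1)^m * ((-5/4::real) gchoose m)"
proof -
  have pp: "pochhammer (5/4::real) m > 0" by (rule pochhammer_pos) simp
  have p: "pochhammer (5/4::real) m / fact m \<ge> 0" using pp by simp
  have "(-5/4::real) gchoose m = (-1)^m * (pochhammer (5/4) m / fact m)"
    by (simp add: gbinomial_pochhammer)
  then show ?thesis using p pp by (simp add: abs_mult)
qed

lemma bt_abs: "\<bar>bt \<sigma> k\<bar> = bt (-\<bar>\<sigma>\<bar>) k"
proof (cases "even k")
  case True
  have "\<bar>bt \<sigma> k\<bar> = \<bar>(-5/4::real) gchoose (k div 2)\<bar> * \<bar>\<sigma>\<bar>^(k div 2)"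
    using True by (simp add: bt_def abs_mult power_abs)
  also have "\<dots> = ((-5/4::real) gchoose (k div 2)) * ((-1)^(k div 2) * \<bar>\<sigma>\<bar>^(k div 2))"
    unfolding gchoose54_sign by (simp add: mult_ac)
  also have "\<dots> = bt (-\<bar>\<sigma>\<bar>) k"
    using True by (simp add: bt_def power_minus[of "\<bar>\<sigma>\<bar>"])
  finally show ?thesis .
qed (simp add: bt_def)

lemma aa_abs_le:
  assumes "c \<ge> 0" "\<sigma> \<ge> 0"
  shows "\<bar>aa c \<sigma> k\<bar> \<le> (-1)^k * aa c (-\<sigma>) k"
proof -
  have "\<bar>aa c \<sigma> k\<bar> \<le> (\<Sum>n\<le>k div 2. \<bar>c^(k-2*n) / fact (k-2*n) * bb \<sigma> (k-2*n) n\<bar>)"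
    unfolding aa_def by (rule sum_abs)
  also have "\<dots> = (\<Sum>n\<le>k div 2. (-1)^k * (c^(k-2*n) / fact (k-2*n) * bb (-\<sigma>) (k-2*n) n))"
  proof (rule sum.cong)
    fix n assume "n \<in> {..k div 2}"
    then have kn: "k - 2*n + 2*n = k" by auto
    have "\<bar>bb \<sigma> (k-2*n) n\<bar> = bb (-\<sigma>) (k-2*n) n * (-1)^k"
      using abs_bb[of \<sigma> "k-2*n" n 1] assms kn by simp
    then show "\<bar>c^(k-2*n) / fact (k-2*n) * bb \<sigma> (k-2*n) n\<bar> = (-1)^k * (c^(k-2*n) / fact (k-2*n) * bb (-\<sigma>) (k-2*n) n)"
      using assms by (simp add: abs_mult)
  qed simp
  also have "\<dots> = (-1)^k * aa c (-\<sigma>) k" unfolding aa_def by (simp add: sum_distrib_left)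
  finally show ?thesis .
qed

lemma sums_abs_bound:
  fixes f g :: "nat \<Rightarrow> real"
  assumes "f sums a" "g sums b" "\<And>j. \<bar>f j\<bar> \<le> g j"
  shows "\<bar>a\<bar> \<le> b"
proof -
  have "a \<le> b" using sums_le[OF _ assms(1,2)] assms(3) abs_le_D1 by blast
  moreover have "-b \<le> a"
    using sums_le[OF _ sums_minus[OF assms(2)] assms(1)] assms(3) by (meson abs_le_D2 minus_le_iff)
  ultimately show ?thesis by simp
qed

lemma exp_le_2cosh: "exp (y::real) \<le> 2 * cosh y"
  unfolding cosh_def by (simp add: real_scaleR_def)

lemma five_powr: "(5::real) powr (5/4) \<le> 15/2"
proof -
  have "(5::real) powr (1/4) \<le> (81/16) powr (1/4)" by (rule powr_mono2) auto
  also have "(81/16::real) = (3/2) powr 4"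
  proof -
    have "(3/2::real) powr 4 = (3/2)^4" using powr_realpow[of "3/2::real" 4] by simp
    then show ?thesis by (simp add: power_divide)
  qed
  also have "((3/2::real) powr 4) powr (1/4) = 3/2" by (subst powr_powr) simp
  finally have a: "(5::real) powr (1/4) \<le> 3/2" .
  have "(5::real) powr (5/4) = 5 powr (1 + 1/4)" by simp
  also have "\<dots> = 5 powr 1 * 5 powr (1/4)" by (rule powr_add)
  also have "\<dots> \<le> 5 * (3/2)" using a by simp
  finally show ?thesis by simp
qed

lemma Mr_bound:
  fixes S :: real
  assumes S: "S \<ge> 1" and r: "r = sqrt (4/(5*S))"
  shows "exp (2*pi/sqrt 3 * ww (-S) (-r)) * (1 + -S * r^2) powr (-5/4) \<le> 15 * cosh (2*pi* sqrt (S/3))"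
proof -
  have r0: "r > 0" unfolding r using S by simp
  have Sr2: "S * r^2 = 4/5" unfolding r using S by simp
  have w: "ww (-S) (-r) = (1 - sqrt (1/5)) / r"
  proof -
    have "1 + -S * r^2 = 1/5" using Sr2 by simp
    then show ?thesis unfolding ww_def using r0 by (simp add: field_simps)
  qed
  have s15: "sqrt (1/5::real) \<ge> 1/5"
    by (rule real_le_rsqrt) (simp add: power2_eq_square)
  have s45: "sqrt (4/5::real) \<ge> 4/5"
    by (rule real_le_rsqrt) (simp add: power2_eq_square)
  have "ww (-S) (-r) \<le> (4/5) / r" unfolding w using r0 s15 by (intro divide_right_mono) auto
  also have "(4/5) / r \<le> sqrt S"
  proof -
    have "r * sqrt S = sqrt (4/5)" unfolding r using S by (simp add: real_sqrt_mult[symmetric])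
    then have "4 \<le> 5 * (r * sqrt S)" using s45 by simp
    then show ?thesis using r0 by (simp add: divide_le_eq mult_ac)
  qed
  finally have wS: "ww (-S) (-r) \<le> sqrt S" .
  have "2*pi/sqrt 3 * ww (-S) (-r) \<le> 2*pi/sqrt 3 * sqrt S"
    using wS by (intro mult_left_mono) auto
  also have "2*pi/sqrt 3 * sqrt S = 2*pi* sqrt (S/3)" by (simp add: real_sqrt_divide)
  finally have e: "exp (2*pi/sqrt 3 * ww (-S) (-r)) \<le> 2 * cosh (2*pi* sqrt (S/3))"
    by (meson exp_le_2cosh exp_le_cancel_iff order_trans)
  have p: "(1 + -S * r^2) powr (-5/4) \<le> 15/2"
  proof -
    have h: "(1 + -S * r^2) = 1/5" using Sr2 by simp
    have h1: "(1/5::real) powr (-5/4) = 1 / 5 powr (-5/4)"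
      by (subst powr_divide) auto
    have h2: "(5::real) powr (-5/4) = 1 / 5 powr (5/4)"
      using powr_minus_divide[of "5::real" "5/4"] by simp
    have "(1 + -S * r^2) powr (-5/4) = 5 powr (5/4)" unfolding h h1 h2 by simp
    then show ?thesis using five_powr by simp
  qed
  have "exp (2*pi/sqrt 3 * ww (-S) (-r)) * (1 + -S * r^2) powr (-5/4) \<le> (2 * cosh (2*pi* sqrt (S/3))) * (15/2)"
    by (rule mult_mono[OF e p]) auto
  then show ?thesis by simp
qed


lemma xr_pow:
  fixes S x r :: real and n :: nat
  assumes S: "S \<ge> 1" and r: "r = sqrt (4/(5*S))" and x: "x = 1 / sqrt (real n)" and n: "n > 0"
  shows "(x/r)^(N+2) = real n powr (-(real N + 2)/2) * ((5*S/4) * (5*S/4) powr (real N / 2))"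
proof -
  have r0: "r > 0" unfolding r using S by simp
  have x0: "x > 0" unfolding x using n by simp
  have "(x/r)^2 = x^2 / r^2" by (simp add: power_divide)
  also have "x^2 = 1 / real n" unfolding x using n by (simp add: power_divide)
  also have "r^2 = 4/(5*S)" unfolding r using S by simp
  finally have "(x/r)^2 = 5*S/(4*real n)" by simp
  then have "sqrt (5*S/(4*real n)) = x/r"
    using x0 r0 by (intro real_sqrt_unique) auto
  then have xr: "x/r = (5*S/(4*real n)) powr (1/2)"
    using S n by (subst powr_half_sqrt) auto
  have "(x/r)^(N+2) = ((5*S/(4*real n)) powr (1/2)) powr (real (N+2))"
    unfolding xr using S n by (subst powr_realpow) auto
  also have "\<dots> = (5*S/(4*real n)) powr ((real N + 2)/2)" by (simp add: powr_powr add.commute)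
  also have "\<dots> = (5*S/4) powr ((real N + 2)/2) / real n powr ((real N + 2)/2)"
    using S n by (simp add: powr_divide divide_divide_eq_left[symmetric] del: divide_divide_eq_left)
  also have "(5*S/4) powr ((real N + 2)/2) = (5*S/4) powr 1 * (5*S/4) powr (real N / 2)"
  proof -
    have "(real N + 2)/2 = 1 + real N/2" by simp
    then show ?thesis by (simp only: powr_add)
  qed
  also have "real n powr ((real N + 2)/2) = 1 / real n powr (-(real N + 2)/2)"
  proof -
    have "-(real N + 2)/2 = -((real N + 2)/2)" by (rule minus_divide_left[symmetric])
    then show ?thesis by (simp only: powr_minus_divide) simp
  qed
  finally show ?thesis using S by simp
qed

lemma final_num:
  fixes S x r Mr :: real and n s :: nat
  assumes s: "s \<ge> 1" and S: "S = real s" and r: "r = sqrt (4/(5*S))" and x: "x = 1 / sqrt (real n)"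
    and n: "n > 0" and Mr: "Mr \<le> 15 * kappa s"
  shows "(x/r)^(N+2) * Mr \<le> C3 N s * real n powr (-(real N + 2)/2)"
proof -
  have S1: "S \<ge> 1" using s S by simp
  define P where "P = (5*S/4) powr (real N / 2)"
  define Q where "Q = real n powr (-(real N + 2)/2)"
  have P0: "P \<ge> 0" and Q0: "Q \<ge> 0" unfolding P_def Q_def by auto
  have k0: "kappa s \<ge> 0" unfolding kappa_def by simp
  have C1: "C1 N s \<ge> 0" unfolding C1_def using k0 by simp
  have C2: "C2 N s = 20 * S / 11 * P" unfolding C2_def P_def S by simp
  have xr0: "(x/r)^(N+2) \<ge> 0" unfolding x r using S1 by simp
  have "(x/r)^(N+2) * Mr \<le> (x/r)^(N+2) * (15 * kappa s)"
    using Mr xr0 by (intro mult_left_mono) auto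
  also have "\<dots> = Q * ((5*S/4) * P * 15 * kappa s)"
    unfolding xr_pow[OF S1 r x n] Q_def P_def by (simp add: mult_ac)
  also have "\<dots> \<le> Q * C3 N s"
  proof (intro mult_left_mono Q0)
    have "(5*S/4) * P * 15 * kappa s \<le> ((20.5 + 12 * real s) * C2 N s) * kappa s"
    proof -
      have SP: "S * P \<ge> 0" using S1 P0 by simp
      have e1: "(5*S/4) * P * 15 = 18.75 * (S * P)" by simp
      have e2: "(20.5 + 12 * real s) * (20 * S / 11 * P) = ((20.5 + 12 * real s) * (20/11)) * (S * P)" by simp
      have "18.75 \<le> (20.5 + 12 * real s) * (20/11)" by simp
      then have "(5*S/4) * P * 15 \<le> ((20.5 + 12 * real s) * (20/11)) * (S * P)"
        unfolding e1 using SP by (intro mult_right_mono) auto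
      then have "(5*S/4) * P * 15 \<le> (20.5 + 12 * real s) * (20 * S / 11 * P)" unfolding e2 .
      then show ?thesis unfolding C2 using k0 by (intro mult_right_mono) auto
    qed
    also have "\<dots> \<le> C3 N s"
    proof -
      have "C2 N s \<ge> 0" unfolding C2 using P0 S1 by simp
      then have a: "0 \<le> (1 + 1.2 * sqrt (real s)) * C2 N s" by simp
      have b: "((20.5 + 12 * real s) * C2 N s + 0.7) * kappa s = (20.5 + 12 * real s) * C2 N s * kappa s + 0.7 * kappa s"
        by (simp add: algebra_simps)
      show ?thesis unfolding C3_def b using C1 k0 a by linarith
    qed
    finally show "(5*S/4) * P * 15 * kappa s \<le> C3 N s" .
  qed
  finally show ?thesis unfolding Q_def by (simp add: mult_ac)
qed

lemma n_facts:
  fixes s n :: nat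
  assumes "s \<ge> 1" "n \<ge> n1 s"
  shows "n \<ge> 4" "5 * s < 4 * n"
proof -
  have "s \<le> s^4" using assms(1) by (simp add: self_le_power)
  then show "n \<ge> 4" "5 * s < 4 * n" using assms unfolding n1_def
    by (auto split: if_splits)
qed

theorem lemma5p3:
  fixes N s n :: nat
  assumes "N \<ge> 3" and "s \<ge> 1" and "n \<ge> n1 s"
  shows "\<exists>E :: real.
    \<bar>E\<bar> \<le> C3 N s * real n powr (- (real N + 2) / 2) \<and>
    exp (2 * pi * sqrt ((real n + real s) / 3)) /
      (8 * 3 powr (3/4) * sqrt pi * (real n + real s) powr (5/4))
    = exp (2 * pi * sqrt (real n / 3)) /
      (8 * 3 powr (3/4) * sqrt pi * real n powr (5/4)) *
      ((\<Sum>m=0..N+1. d2 s m / real n powr (real m / 2)) + E)"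
proof -
  define S where "S = real s"
  define c where "c = 2*pi/sqrt 3"
  define x where "x = 1 / sqrt (real n)"
  define r where "r = sqrt (4/(5*S))"
  define K where "K = N + 2"
  have S1: "S \<ge> 1" using assms(2) unfolding S_def by simp
  have nf: "n \<ge> 4" "5 * s < 4 * n" using n_facts[OF assms(2,3)] by auto
  have n0: "n > 0" and rn0: "real n > 0" using nf by auto
  have n5: "5 * S < 4 * real n" using nf unfolding S_def by linarith
  have x0: "x > 0" unfolding x_def using rn0 by simp
  have x2: "x^2 = 1 / real n" unfolding x_def using rn0 by (simp add: power_divide)
  have r0: "r > 0" unfolding r_def using S1 by simp
  have r2: "r^2 = 4/(5*S)" unfolding r_def using S1 by simp
  have Sr2: "S * r^2 = 4/5" using r2 S1 by simp
  have Sx2: "S * x^2 < 4/5" unfolding x2 using n5 rn0 by (simp add: field_simps)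
  have xr: "x < r"
  proof -
    have "S * x^2 < S * r^2" using Sx2 Sr2 by simp
    then have "x^2 < r^2" using S1 by simp
    then show ?thesis using r0 by (intro power_less_imp_less_base[of x 2 r]) auto
  qed
  have c0: "c \<ge> 0" unfolding c_def by simp
  define a where "a k = aa c S k" for k
  define ah where "ah k = (-1)^k * aa c (-S) k" for k
  define b where "b k = bt S k" for k
  define bh where "bh k = bt (-S) k" for k
  have a_le: "\<bar>a k\<bar> \<le> ah k" for k unfolding a_def ah_def using aa_abs_le[OF c0] S1 by simp
  have b_abs: "\<bar>b k\<bar> = bh k" for k unfolding b_def bh_def using bt_abs[of S k] S1 by simp
  have ah0: "ah k \<ge> 0" for k using a_le[of k] by linarith
  have bh0: "bh k \<ge> 0" for k using b_abs[of k] by linarith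
  have A1: "(\<lambda>k. a k * x^k) sums exp (c * ww S x)"
    unfolding a_def using x0 Sx2 S1 by (intro claimB) auto
  have A2: "(\<lambda>k. ah k * y^k) sums exp (c * ww (-S) (-y))" if "y > 0" "S * y^2 < 1" for y
  proof -
    have "(\<lambda>k. aa c (-S) k * (-y)^k) sums exp (c * ww (-S) (-y))"
      using that S1 by (intro claimB) auto
    moreover have "aa c (-S) k * (-y)^k = ah k * y^k" for k
      unfolding ah_def by (simp add: power_minus[of y])
    ultimately show ?thesis by simp
  qed
  have B1: "(\<lambda>k. b k * x^k) sums (1 + S * x^2) powr (-5/4)"
    unfolding b_def using Sx2 S1 by (intro claimC) auto
  have B2: "(\<lambda>k. bh k * y^k) sums (1 + -S * y^2) powr (-5/4)" if "S * y^2 < 1" for y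
    unfolding bh_def using that S1 by (intro claimC) (auto simp: abs_mult)
  have Sx1: "S * x^2 < 1" using Sx2 by simp
  have sa: "summable (\<lambda>k. norm (a k * x^k))"
  proof (rule summable_norm_comparison_test)
    show "\<exists>N. \<forall>k\<ge>N. norm (a k * x^k) \<le> ah k * x^k"
    proof (intro exI allI impI)
      fix k :: nat
      show "norm (a k * x^k) \<le> ah k * x^k"
        using a_le[of k] x0 by (simp add: abs_mult mult_right_mono)
    qed
    show "summable (\<lambda>k. ah k * x^k)" using A2[OF x0 Sx1] by (rule sums_summable)
  qed
  have sb: "summable (\<lambda>k. norm (b k * x^k))"
  proof -
    have "norm (b k * x^k) = bh k * x^k" for k using b_abs x0 by (simp add: abs_mult)
    moreover have "summable (\<lambda>k. bh k * x^k)" using B2[OF Sx1] by (rule sums_summable)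
    ultimately show ?thesis by simp
  qed
  define G where "G = exp (c * ww S x) * (1 + S * x^2) powr (-5/4)"
  have P1: "(\<lambda>k. \<Sum>i\<le>k. (a i * x^i) * (b (k-i) * x^(k-i))) sums G"
    using Cauchy_product_sums[OF sa sb] unfolding G_def sums_unique[OF A1, symmetric] sums_unique[OF B1, symmetric] .
  define D where "D k = d2 s k * x^k" for k
  have Dk: "(\<Sum>i\<le>k. (a i * x^i) * (b (k-i) * x^(k-i))) = D k" for k
  proof -
    have "(\<Sum>i\<le>k. (a i * x^i) * (b (k-i) * x^(k-i))) = (\<Sum>i\<le>k. a i * b (k-i) * x^k)"
    proof (rule sum.cong)
      fix i assume "i \<in> {..k}"
      then have "x^i * x^(k-i) = x^k" by (simp flip: power_add)
      then show "(a i * x^i) * (b (k-i) * x^(k-i)) = a i * b (k-i) * x^k"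
        by (metis mult.assoc mult.left_commute)
    qed simp
    also have "\<dots> = D k" unfolding D_def d2_conv a_def b_def c_def S_def
      by (simp add: sum_distrib_right)
    finally show ?thesis .
  qed
  have DG: "D sums G" using P1 unfolding Dk .
  have Sr1: "S * r^2 < 1" using Sr2 by simp
  have sar: "summable (\<lambda>k. norm (ah k * r^k))"
  proof -
    have "norm (ah k * r^k) = ah k * r^k" for k using ah0 r0 by (simp add: abs_mult)
    moreover have "summable (\<lambda>k. ah k * r^k)" using A2[OF r0 Sr1] by (rule sums_summable)
    ultimately show ?thesis by simp
  qed
  have sbr: "summable (\<lambda>k. norm (bh k * r^k))"
  proof -
    have "norm (bh k * r^k) = bh k * r^k" for k using bh0 r0 by (simp add: abs_mult)
    moreover have "summable (\<lambda>k. bh k * r^k)" using B2[OF Sr1] by (rule sums_summable)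
    ultimately show ?thesis by simp
  qed
  define Mr where "Mr = exp (c * ww (-S) (-r)) * (1 + -S * r^2) powr (-5/4)"
  define m where "m k = (\<Sum>i\<le>k. ah i * bh (k-i))" for k
  have P2: "(\<lambda>k. m k * r^k) sums Mr"
  proof -
    have "(\<lambda>k. \<Sum>i\<le>k. (ah i * r^i) * (bh (k-i) * r^(k-i))) sums Mr"
      using Cauchy_product_sums[OF sar sbr] unfolding Mr_def
        sums_unique[OF A2[OF r0 Sr1], symmetric] sums_unique[OF B2[OF Sr1], symmetric] .
    moreover have "(\<Sum>i\<le>k. (ah i * r^i) * (bh (k-i) * r^(k-i))) = m k * r^k" for k
    proof -
      have "(\<Sum>i\<le>k. (ah i * r^i) * (bh (k-i) * r^(k-i))) = (\<Sum>i\<le>k. ah i * bh (k-i) * r^k)"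
      proof (rule sum.cong)
        fix i assume "i \<in> {..k}"
        then have "r^i * r^(k-i) = r^k" by (simp flip: power_add)
        then show "(ah i * r^i) * (bh (k-i) * r^(k-i)) = ah i * bh (k-i) * r^k"
          by (metis mult.assoc mult.left_commute)
      qed simp
      then show ?thesis unfolding m_def by (simp add: sum_distrib_right)
    qed
    ultimately show ?thesis by simp
  qed
  have m0: "m k \<ge> 0" for k unfolding m_def using ah0 bh0 by (simp add: sum_nonneg)
  have d2_le: "\<bar>d2 s k\<bar> \<le> m k" for k
  proof -
    have "d2 s k = (\<Sum>i\<le>k. a i * b (k-i))" unfolding d2_conv a_def b_def c_def S_def ..
    then have "\<bar>d2 s k\<bar> \<le> (\<Sum>i\<le>k. \<bar>a i * b (k-i)\<bar>)" using sum_abs by simp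
    also have "\<dots> \<le> m k" unfolding m_def
    proof (rule sum_mono)
      fix i assume "i \<in> {..k}"
      show "\<bar>a i * b (k-i)\<bar> \<le> ah i * bh (k-i)"
        unfolding abs_mult b_abs using a_le[of i] bh0[of "k-i"] by (intro mult_right_mono) auto
    qed
    finally show ?thesis .
  qed
  define E where "E = G - (\<Sum>i<K. D i)"
  have T1: "(\<lambda>j. D (j+K)) sums E" unfolding E_def by (rule sums_split_initial_segment[OF DG])
  have T2: "(\<lambda>j. (x/r)^K * (m (j+K) * r^(j+K))) sums ((x/r)^K * (Mr - (\<Sum>i<K. m i * r^i)))"
    by (rule sums_mult[OF sums_split_initial_segment[OF P2]])
  have Tb: "\<bar>D (j+K)\<bar> \<le> (x/r)^K * (m (j+K) * r^(j+K))" for j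
  proof -
    have q0: "0 \<le> x/r" "x/r \<le> 1" using x0 r0 xr by auto
    have "\<bar>D (j+K)\<bar> \<le> m (j+K) * x^(j+K)" unfolding D_def using d2_le x0 by (simp add: abs_mult mult_right_mono)
    also have "x^(j+K) = (x/r)^(j+K) * r^(j+K)" using r0 by (simp add: power_divide)
    also have "(x/r)^(j+K) \<le> (x/r)^K" using q0 by (intro power_decreasing) auto
    then have "m (j+K) * ((x/r)^(j+K) * r^(j+K)) \<le> m (j+K) * ((x/r)^K * r^(j+K))"
      using m0 r0 by (intro mult_left_mono mult_right_mono) auto
    finally show ?thesis by (simp add: mult_ac)
  qed
  have Eb1: "\<bar>E\<bar> \<le> (x/r)^K * (Mr - (\<Sum>i<K. m i * r^i))" by (rule sums_abs_bound[OF T1 T2 Tb])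
  have "(x/r)^K * (Mr - (\<Sum>i<K. m i * r^i)) \<le> (x/r)^K * Mr"
  proof -
    have "(\<Sum>i<K. m i * r^i) \<ge> 0" using m0 r0 by (simp add: sum_nonneg)
    moreover have "(x/r)^K \<ge> 0" using x0 r0 by simp
    ultimately show ?thesis by (simp add: mult_left_mono)
  qed
  also have "(x/r)^K * Mr \<le> C3 N s * real n powr (-(real N + 2)/2)"
    unfolding K_def
  proof (rule final_num[OF assms(2) S_def r_def x_def n0])
    show "Mr \<le> 15 * kappa s" unfolding Mr_def c_def kappa_def S_def
      using Mr_bound[of "real s" r] S1 r_def S_def by simp
  qed
  finally have Eb: "\<bar>E\<bar> \<le> C3 N s * real n powr (-(real N + 2)/2)" using Eb1 by linarith
  have sumeq: "(\<Sum>m=0..N+1. d2 s m / real n powr (real m / 2)) = (\<Sum>i<K. D i)"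
  proof -
    have hterm: "d2 s m / real n powr (real m / 2) = D m" for m
    proof -
      have ha: "sqrt (real n) = real n powr (1/2)" using rn0 by (simp add: powr_half_sqrt)
      have hb: "(real n powr (1/2)) ^ m = (real n powr (1/2)) powr (real m)"
        by (rule powr_realpow[symmetric]) (use rn0 in simp)
      have hc: "(real n powr (1/2)) powr (real m) = real n powr (real m / 2)"
        by (simp only: powr_powr) simp
      have "x^m = 1 / real n powr (real m / 2)"
        unfolding x_def power_one_over ha hb hc ..
      then show ?thesis unfolding D_def by simp
    qed
    have "(\<Sum>m=0..N+1. d2 s m / real n powr (real m / 2)) = (\<Sum>m=0..N+1. D m)"
      by (rule sum.cong[OF refl]) (rule hterm)
    also have "(\<Sum>m=0..N+1. D m) = (\<Sum>i<K. D i)"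
      by (rule sum.cong) (auto simp: K_def)
    finally show ?thesis .
  qed
  have SE: "(\<Sum>m=0..N+1. d2 s m / real n powr (real m / 2)) + E = G"
    unfolding sumeq E_def by simp
  have sq: "sqrt (real n) > 0" using rn0 by simp
  have e_w: "c * ww S x = 2*pi* sqrt ((real n + real s)/3) - 2*pi* sqrt (real n/3)"
  proof -
    have "ww S x = (sqrt (1 + S / real n) - 1) * sqrt (real n)"
      unfolding ww_def x2 unfolding x_def using sq by (simp add: field_simps)
    also have "\<dots> = sqrt (real n + S) - sqrt (real n)"
    proof -
      have "sqrt (1 + S / real n) * sqrt (real n) = sqrt ((1 + S / real n) * real n)"
        by (simp add: real_sqrt_mult)
      also have "(1 + S / real n) * real n = real n + S" using rn0 by (simp add: field_simps)
      finally show ?thesis by (simp add: algebra_simps)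
    qed
    finally have w: "ww S x = sqrt (real n + S) - sqrt (real n)" .
    have "c * ww S x = c * sqrt (real n + S) - c * sqrt (real n)" unfolding w by (rule right_diff_distrib)
    moreover have "c * sqrt y = 2*pi* sqrt (y/3)" for y unfolding c_def by (simp add: real_sqrt_divide)
    ultimately show ?thesis unfolding S_def by simp
  qed
  have e_p: "(1 + S * x^2) powr (-5/4) = real n powr (5/4) / (real n + real s) powr (5/4)"
  proof -
    have h: "1 + S * x^2 = (real n + real s) / real n" unfolding x2 S_def using rn0 by (simp add: field_simps)
    have "((real n + real s) / real n) powr (-5/4) = (real n + real s) powr (-5/4) / real n powr (-5/4)"
      using rn0 by (intro powr_divide)
    also have "(real n + real s) powr (-5/4) = 1 / (real n + real s) powr (5/4)"
      using powr_minus_divide[of "real n + real s" "5/4"] by simp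
    also have "real n powr (-5/4) = 1 / real n powr (5/4)"
      using powr_minus_divide[of "real n" "5/4"] by simp
    finally show ?thesis unfolding h by simp
  qed
  have eq: "exp (2 * pi * sqrt ((real n + real s) / 3)) /
      (8 * 3 powr (3/4) * sqrt pi * (real n + real s) powr (5/4))
    = exp (2 * pi * sqrt (real n / 3)) /
      (8 * 3 powr (3/4) * sqrt pi * real n powr (5/4)) * G"
  proof -
    have p1: "real n powr (5/4) > 0" "(real n + real s) powr (5/4) > 0" "(3::real) powr (3/4) > 0" "sqrt pi > 0"
      using rn0 by auto
    have "G = exp (2*pi* sqrt ((real n + real s)/3)) / exp (2*pi* sqrt (real n/3)) *
        (real n powr (5/4) / (real n + real s) powr (5/4))"
      unfolding G_def e_w e_p exp_diff ..
    then show ?thesis using p1 by (simp add: field_simps)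
  qed
  show ?thesis
    by (rule exI[of _ E]) (use Eb eq SE in simp)
qed

end
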